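(* For every integer $v\ge1$, $$\sum_{i=0}^{v-1}\left(2^{2v-2i}\,c_{2v,i}-\frac{2^{2i}}{(2v-1)!}\,s(v,i)\,\Gamma(2v-2i)\right)\left(\frac{\pi}{2}\right)^{2i-2v}\zeta(2v-2i)=2^{v}.$$
   Context: The generalized cosecant numbers $c_{\rho,k}$ are the coefficients in $\left(\frac{x}{\sin x}\right)^{\rho}=\sum_{k\ge0}c_{\rho,k}x^{2k}$. For integers $v\ge1$ and $0\le n\le v-1$, $s(v,n)$ denotes the $n$-th elementary symmetric polynomial evaluated at $1^2,2^2,\dots,(v-1)^2$, with $s(v,0)=1$. $\zeta$ is the Riemann zeta function. *)

theory Defs
  imports "HOL-Analysis.Analysis" "HOL-Computational_Algebra.Formal_Power_Series"
begin

definition sinc_fps :: "real fps" where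
  "sinc_fps = fps_shift 1 (fps_sin 1)"

definition cosec_num :: "nat \<Rightarrow> nat \<Rightarrow> real" where
  "cosec_num \<rho> k = fps_nth ((inverse sinc_fps) ^ \<rho>) (2 * k)"

definition esym_sq :: "nat \<Rightarrow> nat \<Rightarrow> real" where
  "esym_sq v n = (\<Sum>S | S \<subseteq> {1..<v} \<and> card S = n. \<Prod>k\<in>S. real k ^ 2)"

definition zeta_real :: "real \<Rightarrow> real" where
  "zeta_real s = (\<Sum>n. 1 / real (Suc n) powr s)"

end

theory Submission
  imports Defs
begin


definition th :: "real fps \<Rightarrow> real fps" where "th f = fps_X * fps_deriv f"

lemma th_nth: "fps_nth (th f) n = of_nat n * fps_nth f n"
  unfolding th_def by (cases n) auto

lemma th_mult: "th (f * g) = th f * g + f * th g"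
  unfolding th_def by (simp add: algebra_simps)

lemma th_add: "th (f + g) = th f + th g"
  unfolding th_def by (simp add: algebra_simps)

lemma th_diff: "th (f - g) = th f - th g"
  unfolding th_def by (simp add: algebra_simps)

lemma th_const: "th (of_nat n) = 0" "th 1 = 0" "th 2 = 0"
  unfolding th_def by (simp_all add: fps_of_nat)

lemma th_power: "th (f ^ n) = of_nat n * th f * f ^ (n - 1)"
  unfolding th_def by (simp add: fps_deriv_power' algebra_simps)

lemma sinc_X: "fps_X * sinc_fps = fps_sin (1::real)"
  unfolding sinc_fps_def by (intro fps_ext) (auto simp: fps_sin_def)

lemma sinc_0: "fps_nth sinc_fps 0 = 1"
  unfolding sinc_fps_def by simp

definition "iw = inverse sinc_fps"
definition "yy = iw ^ 2"
definition "zz = fps_cos (1::real) * iw"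

lemma iw_w: "iw * sinc_fps = 1"
  unfolding iw_def using sinc_0 by (intro inverse_mult_eq_1) simp

lemma Xw_deriv: "fps_X * fps_deriv sinc_fps = fps_cos 1 - sinc_fps"
proof -
  have "fps_deriv (fps_X * sinc_fps) = fps_cos 1"
    by (simp only: sinc_X fps_sin_deriv) simp
  then show ?thesis by (simp add: algebra_simps)
qed

lemma th_iw: "th iw = iw * (1 - zz)"
proof -
  have "th iw = - (fps_X * fps_deriv sinc_fps) * iw^2"
    unfolding th_def iw_def using sinc_0 by (simp add: fps_inverse_deriv)
  also have "\<dots> = - (fps_cos 1 - sinc_fps) * iw^2" by (simp add: Xw_deriv)
  also have "\<dots> = iw * (1 - zz)"
    using iw_w unfolding zz_def power2_eq_square by (simp add: algebra_simps)
  finally show ?thesis .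
qed

lemma zz_sq: "zz^2 = yy - fps_X^2"
proof -
  have "zz^2 = (fps_cos 1)^2 * iw^2" unfolding zz_def by (simp add: power_mult_distrib)
  also have "(fps_cos 1)^2 = 1 - (fps_sin (1::real))^2"
    using fps_sin_cos_sum_of_squares[of "1::real"] by (simp add: algebra_simps)
  also have "(fps_sin (1::real))^2 = fps_X^2 * sinc_fps^2" by (simp add: sinc_X[symmetric] power_mult_distrib)
  also have "(1 - fps_X^2 * sinc_fps^2) * iw^2 = iw^2 - fps_X^2 * (iw * sinc_fps)^2"
    by (simp add: power2_eq_square algebra_simps)
  finally show ?thesis using iw_w unfolding yy_def by simp
qed

lemma th_yy: "th yy = 2 * yy * (1 - zz)"
  unfolding yy_def using th_power[of iw 2] th_iw by (simp add: algebra_simps power2_eq_square)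

lemma th_zz: "th zz = zz - yy"
proof -
  have "th (fps_cos (1::real)) = - fps_X * fps_sin 1"
    unfolding th_def by (simp add: fps_cos_deriv flip: fps_const_neg)
  also have "\<dots> = - (fps_X^2 * sinc_fps)" by (simp add: sinc_X[symmetric] power2_eq_square)
  finally have c: "th (fps_cos (1::real)) = - (fps_X^2 * sinc_fps)" .
  have "th zz = th (fps_cos 1) * iw + fps_cos 1 * th iw" unfolding zz_def by (rule th_mult)
  also have "\<dots> = zz - zz^2 - fps_X^2"
    using iw_w unfolding c th_iw zz_def by (simp add: algebra_simps power2_eq_square)
  also have "\<dots> = zz - yy" by (simp add: zz_sq)
  finally show ?thesis .
qed

lemma th_cmult: "th (of_nat n * f) = of_nat n * th f" "th (2 * f) = 2 * th f"
  unfolding th_def by (simp_all add: algebra_simps)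

lemma th_Y: "th (yy ^ v) = 2 * (of_nat v * (yy ^ v * (1 - zz)))"
proof (cases v)
  case (Suc m)
  have "th (yy ^ v) = of_nat v * th yy * yy ^ (v - 1)" by (rule th_power)
  also have "\<dots> = of_nat v * (2 * yy * (1 - zz)) * yy ^ m" by (simp only: th_yy Suc) simp
  also have "\<dots> = 2 * (of_nat v * (yy ^ v * (1 - zz)))" using Suc by (simp add: algebra_simps)
  finally show ?thesis .
qed (simp add: th_const)

lemma ode: "of_nat (2 * v * (2 * v + 1)) * yy ^ (v + 1) =
   of_nat (2 * v * (2 * v + 1)) * yy ^ v - of_nat (4 * v + 1) * th (yy ^ v) + th (th (yy ^ v)) + of_nat (4 * v ^ 2) * fps_X ^ 2 * yy ^ v"
proof -
  have "th (th (yy^v)) = 2 * (of_nat v * (th (yy^v) * (1 - zz) - yy^v * th zz))"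
    unfolding th_Y th_cmult th_mult th_diff th_const by (simp add: algebra_simps)
  also have "\<dots> = 2 * (of_nat v * (2 * (of_nat v * (yy ^ v * (1 - zz))) * (1 - zz) - yy^v * (zz - yy)))"
    by (simp add: th_Y th_zz)
  finally have tt: "th (th (yy^v)) = \<dots>" .
  have X2: "fps_X^2 = yy - zz^2" using zz_sq by simp
  show ?thesis unfolding tt unfolding th_Y X2 by (simp add: algebra_simps power2_eq_square)
qed

definition "ac v n = fps_nth (yy ^ v) n"

lemma nth_ofnat_mult: "fps_nth (of_nat c * f) n = of_nat c * fps_nth f n"
  by (simp flip: fps_of_nat)

lemma coeff_rec: "real (2 * v * (2 * v + 1)) * ac (v + 1) n =
   (real n - 2 * real v) * (real n - 2 * real v - 1) * ac v n + (if n < 2 then 0 else 4 * real v ^ 2 * ac v (n - 2))"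
proof -
  have "fps_nth (of_nat (2 * v * (2 * v + 1)) * yy ^ (v + 1)) n = fps_nth (
   of_nat (2 * v * (2 * v + 1)) * yy ^ v - of_nat (4 * v + 1) * th (yy ^ v) + th (th (yy ^ v)) + of_nat (4 * v ^ 2) * (fps_X ^ 2 * yy ^ v)) n"
    using ode[of v] by (simp add: mult.assoc)
  then have "real (2 * v * (2 * v + 1)) * ac (v + 1) n =
     real (2 * v * (2 * v + 1)) * ac v n - real (4 * v + 1) * (real n * ac v n) + real n * (real n * ac v n)
       + real (4 * v ^ 2) * (if n < 2 then 0 else ac v (n - 2))"
    unfolding ac_def fps_add_nth fps_sub_nth nth_ofnat_mult th_nth fps_X_power_mult_nth by simp
  then show ?thesis by (simp add: algebra_simps power2_eq_square)
qed

lemma ac_1_0: "ac 1 0 = 1"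
proof -
  have "fps_nth iw 0 = 1" unfolding iw_def using sinc_0 by simp
  then show ?thesis unfolding ac_def yy_def by (simp add: fps_mult_nth power2_eq_square)
qed

lemma cosec_ac: "cosec_num (2 * v) i = ac v (2 * i)"
  unfolding cosec_num_def ac_def yy_def iw_def by (simp add: power_mult)



lemma subset_sum_insert:
  fixes f :: "nat \<Rightarrow> real"
  assumes "finite A" "a \<notin> A" "i \<ge> 1"
  shows "(\<Sum>S | S \<subseteq> insert a A \<and> card S = i. \<Prod>k\<in>S. f k)
       = (\<Sum>S | S \<subseteq> A \<and> card S = i. \<Prod>k\<in>S. f k) + f a * (\<Sum>S | S \<subseteq> A \<and> card S = i - 1. \<Prod>k\<in>S. f k)"
proof -
  let ?U = "{S. S \<subseteq> insert a A \<and> card S = i}"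
  let ?P = "{S. S \<subseteq> A \<and> card S = i}"
  let ?Q = "{S. S \<subseteq> A \<and> card S = i - 1}"
  have U: "?U = ?P \<union> insert a ` ?Q"
  proof (intro equalityI subsetI)
    fix S assume S: "S \<in> ?U"
    show "S \<in> ?P \<union> insert a ` ?Q"
    proof (cases "a \<in> S")
      case True
      have "S - {a} \<in> ?Q" using S True assms
        by (auto simp: card_Diff_singleton finite_subset)
      moreover have "S = insert a (S - {a})" using True by auto
      ultimately show ?thesis by blast
    next
      case False then show ?thesis using S by auto
    qed
  next
    fix S assume "S \<in> ?P \<union> insert a ` ?Q"
    then show "S \<in> ?U"
    proof
      assume "S \<in> ?P" then show ?thesis by auto
    next
      assume "S \<in> insert a ` ?Q"
      then obtain T where T: "T \<subseteq> A" "card T = i - 1" "S = insert a T" by auto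
      have "finite T" using T assms finite_subset by blast
      then have "card S = i" using T assms by (auto simp: card_insert_if)
      then show ?thesis using T by auto
    qed
  qed
  have fin: "finite ?P" "finite (insert a ` ?Q)" using assms by (auto intro: finite_subset[of _ "Pow A"])
  have disj: "?P \<inter> insert a ` ?Q = {}" using assms by auto
  have inj: "inj_on (insert a) ?Q"
  proof (rule inj_onI)
    fix x y assume "x \<in> ?Q" "y \<in> ?Q" "insert a x = insert a y"
    moreover have "a \<notin> x" "a \<notin> y" using assms calculation by auto
    ultimately show "x = y" by (metis Diff_insert_absorb)
  qed
  have "(\<Sum>S\<in>?U. \<Prod>k\<in>S. f k) = (\<Sum>S\<in>?P. \<Prod>k\<in>S. f k) + (\<Sum>S\<in>insert a ` ?Q. \<Prod>k\<in>S. f k)"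
    unfolding U by (rule sum.union_disjoint[OF fin disj])
  also have "(\<Sum>S\<in>insert a ` ?Q. \<Prod>k\<in>S. f k) = (\<Sum>T\<in>?Q. \<Prod>k\<in>insert a T. f k)"
    by (subst sum.reindex[OF inj]) simp
  also have "\<dots> = (\<Sum>T\<in>?Q. f a * (\<Prod>k\<in>T. f k))"
    using assms by (intro sum.cong refl) (auto intro: prod.insert finite_subset)
  finally show ?thesis by (simp add: sum_distrib_left)
qed

lemma esym_rec: "v \<ge> 1 \<Longrightarrow> i \<ge> 1 \<Longrightarrow> esym_sq (Suc v) i = esym_sq v i + real v ^ 2 * esym_sq v (i - 1)"
proof -
  assume "v \<ge> 1" "i \<ge> 1"
  then have "{1..<Suc v} = insert v {1..<v}" by auto
  then show ?thesis unfolding esym_sq_def using subset_sum_insert[of "{1..<v}" v i "\<lambda>k. real k ^ 2"] \<open>i \<ge> 1\<close>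
    by simp
qed

lemma esym_0: "esym_sq v 0 = 1"
proof -
  have fs: "\<And>S. S \<subseteq> {1..<v} \<Longrightarrow> finite S" by (rule finite_subset) auto
  have "{S. S \<subseteq> {1..<v} \<and> card S = 0} = {{}}" using fs by auto
  then show ?thesis unfolding esym_sq_def by simp
qed

lemma esym_top: "esym_sq v i = 0" if "v \<le> i" "1 \<le> i"
proof -
  have c: "\<And>S. S \<subseteq> {1..<v} \<Longrightarrow> card S \<le> v - 1" using card_mono[of "{1..<v}"] by fastforce
  have E: "{S. S \<subseteq> {1..<v} \<and> card S = i} = {}"
  proof -
    { fix S assume S: "S \<subseteq> {1..<v}" "card S = i"
      then have "i \<le> v - 1" using c by fastforce
      with that have False by linarith }
    then show ?thesis by auto
  qed
  then show ?thesis unfolding esym_sq_def E by simp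
qed



definition Bc :: "nat \<Rightarrow> nat \<Rightarrow> real" where
  "Bc v i = 4 ^ i * esym_sq v i * fact (2 * (v - i) - 1) / fact (2 * v - 1)"

lemma fact_step: "d \<ge> 1 \<Longrightarrow> (fact (2 * d + 1) :: real) = (2 * real d + 1) * (2 * real d) * fact (2 * d - 1)"
proof -
  assume "d \<ge> 1"
  then obtain e where e: "2 * d = Suc e" by (cases d) auto
  have "(fact (2 * d + 1) :: real) = (2 * real d + 1) * fact (2 * d)" by (simp add: fact_Suc)
  also have "fact (2 * d) = (2 * real d) * (fact (2 * d - 1) :: real)"
  proof -
    have h: "2 * d - 1 = e" using e by simp
    have r: "real (Suc e) = 2 * real d" by (metis e of_nat_mult of_nat_numeral)
    have "(fact (2 * d) :: real) = fact (Suc e)" by (simp only: e)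
    also have "\<dots> = real (Suc e) * fact e" by (rule fact_Suc)
    finally show ?thesis unfolding r h .
  qed
  finally show ?thesis by simp
qed

lemma Brec:
  assumes "v \<ge> 1" "i \<le> v"
  shows "real (2 * v * (2 * v + 1)) * Bc (v + 1) i =
    (2 * real i - 2 * real v) * (2 * real i - 2 * real v - 1) * Bc v i
    + (if i < 1 then 0 else 4 * real v ^ 2 * Bc v (i - 1))"
proof -
  have G: "(fact (2 * (v + 1) - 1) :: real) = (2 * real v + 1) * (2 * real v) * fact (2 * v - 1)"
    using fact_step[of v] assms by (simp add: algebra_simps)
  have Gpos: "(fact (2 * v - 1) :: real) > 0" by simp
  show ?thesis
  proof (cases "i < v")
    case True
    define d where "d = v - i"
    have d1: "d \<ge> 1" using True d_def by simp
    have F1: "fact (2 * (v + 1 - i) - 1) = (fact (2 * d + 1) :: real)"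
      using True by (simp add: d_def algebra_simps Suc_diff_le)
    have Fd: "fact (2 * (v - i) - 1) = (fact (2 * d - 1) :: real)" by (simp add: d_def)
    have ri: "2 * real i - 2 * real v = - 2 * real d" using True by (simp add: d_def of_nat_diff)
    show ?thesis
    proof (cases "i < 1")
      case True
      then have i0: "i = 0" by simp
      have dv: "d = v" using i0 d_def by simp
      have "Bc (v + 1) i = 1" "Bc v i = 1" unfolding Bc_def i0 by (simp_all add: esym_0)
      then show ?thesis using i0 by (simp add: algebra_simps)
    next
      case False
      have e: "esym_sq (v + 1) i = esym_sq v i + real v ^ 2 * esym_sq v (i - 1)"
        using esym_rec[of v i] False assms by simp
      have Fm: "fact (2 * (v - (i - 1)) - 1) = (fact (2 * d + 1) :: real)"
        using False True by (simp add: d_def algebra_simps Suc_diff_le)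
      have p4: "(4::real) ^ i = 4 * 4 ^ (i - 1)" using False by (cases i) auto
      define F where "F = (fact (2 * d - 1) :: real)"
      define G0 where "G0 = (fact (2 * v - 1) :: real)"
      have b1: "Bc (v + 1) i = 4 ^ i * (esym_sq v i + real v ^ 2 * esym_sq v (i - 1)) * ((2 * real d + 1) * (2 * real d) * F) / ((2 * real v + 1) * (2 * real v) * G0)"
        unfolding Bc_def e F1 G fact_step[OF d1] F_def G0_def by simp
      have b2: "Bc v i = 4 ^ i * esym_sq v i * F / G0"
        unfolding Bc_def Fd F_def G0_def by simp
      have b3: "Bc v (i - 1) = 4 ^ (i - 1) * esym_sq v (i - 1) * ((2 * real d + 1) * (2 * real d) * F) / G0"
        unfolding Bc_def Fm fact_step[OF d1] F_def G0_def by simp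
      have nz: "G0 \<noteq> 0" "real v \<noteq> 0" "2 * real v + 1 \<noteq> 0" using assms by (auto simp: G0_def)
      have c: "real (2 * v * (2 * v + 1)) = (2 * real v + 1) * (2 * real v)" by (simp add: algebra_simps)
      have L: "real (2 * v * (2 * v + 1)) * Bc (v + 1) i = 4 ^ i * (esym_sq v i + real v ^ 2 * esym_sq v (i - 1)) * ((2 * real d + 1) * (2 * real d) * F) / G0"
        unfolding b1 c using nz by simp
      show ?thesis unfolding L b2 b3 ri p4 using False nz by (simp add: field_simps)
    qed
  next
    case False
    then have iv: "i = v" using assms by simp
    have e: "esym_sq (v + 1) v = real v ^ 2 * esym_sq v (v - 1)"
      using esym_rec[of v v] esym_top[of v v] assms by simp
    have p4: "(4::real) ^ v = 4 * 4 ^ (v - 1)" using assms by (cases v) auto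
    have c: "real (2 * v * (2 * v + 1)) = (2 * real v + 1) * (2 * real v)" by (simp add: algebra_simps)
    have b1: "Bc (v + 1) i = 4 ^ v * (real v ^ 2 * esym_sq v (v - 1)) / ((2 * real v + 1) * (2 * real v) * fact (2 * v - 1))"
      unfolding Bc_def iv e G by simp
    have nz: "real v \<noteq> 0" "2 * real v + 1 \<noteq> 0" using assms by auto
    have L: "real (2 * v * (2 * v + 1)) * Bc (v + 1) i = 4 * real v ^ 2 * (4 ^ (v - 1) * esym_sq v (v - 1) / fact (2 * v - 1))"
      unfolding b1 c p4 using nz by simp
    have R: "Bc v (v - 1) = 4 ^ (v - 1) * esym_sq v (v - 1) / fact (2 * v - 1)"
      unfolding Bc_def using assms by simp
    have "\<not> i < 1" using iv assms by simp
    then show ?thesis unfolding L using iv R by simp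
  qed
qed

lemma ac_Bc: "1 \<le> v \<Longrightarrow> i < v \<Longrightarrow> ac v (2 * i) = Bc v i"
proof (induction v arbitrary: i rule: nat_induct_at_least)
  case base
  then show ?case using ac_1_0 by (simp add: Bc_def esym_0)
next
  case (Suc v)
  have iv: "i \<le> v" using Suc.prems by simp
  have A: "(2 * real i - 2 * real v) * (2 * real i - 2 * real v - 1) * ac v (2 * i)
        = (2 * real i - 2 * real v) * (2 * real i - 2 * real v - 1) * Bc v i"
  proof (cases "i < v")
    case True then show ?thesis using Suc.IH by simp
  next
    case False then have "i = v" using iv by simp
    then show ?thesis by simp
  qed
  have B: "(if 2 * i < 2 then 0 else 4 * real v ^ 2 * ac v (2 * i - 2))
         = (if i < 1 then 0 else 4 * real v ^ 2 * Bc v (i - 1))"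
  proof (cases "i < 1")
    case False
    then have "2 * i - 2 = 2 * (i - 1)" by simp
    then show ?thesis using Suc.IH[of "i - 1"] False iv by simp
  qed simp
  have "real (2 * v * (2 * v + 1)) * ac (v + 1) (2 * i) = real (2 * v * (2 * v + 1)) * Bc (v + 1) i"
    using coeff_rec[of v "2 * i"] Brec[OF Suc.hyps iv] A B by simp
  moreover have "2 * v * (2 * v + 1) \<noteq> 0" using Suc.hyps by simp
  then have "real (2 * v * (2 * v + 1)) \<noteq> 0" by (metis of_nat_eq_0_iff)
  ultimately show ?case by simp
qed

lemma cosec_Bc: "1 \<le> v \<Longrightarrow> i < v \<Longrightarrow> cosec_num (2 * v) i = Bc v i"
  using ac_Bc cosec_ac by simp



lemma inv_pow_bound:
  fixes y :: real
  assumes "\<bar>y\<bar> \<ge> real m + 1" "k \<ge> 2"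
  shows "\<bar>1 / y ^ k\<bar> \<le> 1 / (real m + 1) ^ 2"
proof -
  have "(real m + 1) ^ 2 \<le> (real m + 1) ^ k" using assms by (intro power_increasing) auto
  also have "\<dots> \<le> \<bar>y\<bar> ^ k" using assms by (intro power_mono) auto
  finally have "(real m + 1) ^ 2 \<le> \<bar>y\<bar> ^ k" .
  moreover have "(real m + 1) ^ 2 > 0" by simp
  ultimately show ?thesis by (simp add: abs_divide power_abs frac_le)
qed

lemma summable_inv_sq: "summable (\<lambda>m. 1 / (real m + 1) ^ 2)"
proof -
  have "summable (\<lambda>m. inverse (real (Suc m)) ^ 2)"
    using inverse_power_summable[of 2] by (subst summable_Suc_iff) (simp add: power_inverse)
  then show ?thesis by (simp add: power_inverse divide_inverse add.commute)
qed

definition rr :: "nat \<Rightarrow> real \<Rightarrow> nat \<Rightarrow> real" where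
  "rr k x m = 1 / (x - (real m + 2) * pi) ^ k + 1 / (x + (real m + 1) * pi) ^ k"

lemma rr_bound:
  assumes "0 \<le> x" "x \<le> pi" "k \<ge> 2"
  shows "\<bar>1 / (x - (real m + 2) * pi) ^ k\<bar> \<le> 1 / (real m + 1) ^ 2"
    "\<bar>1 / (x + (real m + 1) * pi) ^ k\<bar> \<le> 1 / (real m + 1) ^ 2"
    "\<bar>rr k x m\<bar> \<le> 2 / (real m + 1) ^ 2"
proof -
  have pi1: "pi \<ge> 1" using pi_gt3 by simp
  have "(real m + 1) * 1 \<le> (real m + 1) * pi" using pi1 by (intro mult_left_mono) auto
  then have a: "real m + 1 \<le> (real m + 1) * pi" by simp
  have "\<bar>x - (real m + 2) * pi\<bar> \<ge> real m + 1" using assms a by (simp add: algebra_simps abs_if)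
  then show b1: "\<bar>1 / (x - (real m + 2) * pi) ^ k\<bar> \<le> 1 / (real m + 1) ^ 2" using assms inv_pow_bound by blast
  have "\<bar>x + (real m + 1) * pi\<bar> \<ge> real m + 1" using assms a by (simp add: algebra_simps abs_if)
  then show b2: "\<bar>1 / (x + (real m + 1) * pi) ^ k\<bar> \<le> 1 / (real m + 1) ^ 2" using assms inv_pow_bound by blast
  show "\<bar>rr k x m\<bar> \<le> 2 / (real m + 1) ^ 2" unfolding rr_def using b1 b2 abs_triangle_ineq[of "1 / (x - (real m + 2) * pi) ^ k" "1 / (x + (real m + 1) * pi) ^ k"]
    by simp
qed

lemma DERIV_invpow:
  fixes x c :: real
  assumes "x - c \<noteq> 0"
  shows "((\<lambda>x. 1 / (x - c) ^ k) has_field_derivative (- real k * (1 / (x - c) ^ (k + 1)))) (at x within S)"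
proof -
  have d: "((\<lambda>x. inverse ((x - c) ^ k)) has_field_derivative - (inverse ((x - c) ^ k) * (real k * (x - c) ^ (k - 1) * 1) * inverse ((x - c) ^ k))) (at x within S)"
  proof (rule DERIV_inverse')
    have "((\<lambda>x. x - c) has_field_derivative 1) (at x within S)" by (auto intro!: derivative_eq_intros)
    from DERIV_power[OF this, of k] show "((\<lambda>x. (x - c) ^ k) has_field_derivative real k * (x - c) ^ (k - 1) * 1) (at x within S)"
      by (simp add: mult_ac)
  qed (use assms in auto)
  have eq: "- (inverse (y ^ k) * (real k * y ^ (k - 1) * 1) * inverse (y ^ k)) = - real k * (1 / y ^ (k + 1))"
    if y: "y \<noteq> 0" for y :: real
  proof (cases k)
    case (Suc j)
    have "inverse (y ^ k) * (real k * y ^ (k - 1) * 1) * inverse (y ^ k) = real k * (y ^ j / (y ^ Suc j * y ^ Suc j))"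
      using Suc by (simp add: divide_inverse mult_ac)
    also have "y ^ j / (y ^ Suc j * y ^ Suc j) = 1 / y ^ (k + 1)"
      using Suc y by (simp add: field_simps power_Suc)
    finally show ?thesis by simp
  qed simp
  note e = eq[OF assms]
  from d[unfolded e] show ?thesis by (simp add: inverse_eq_divide)
qed

lemma DERIV_invpow':
  fixes x c :: real
  assumes "x + c \<noteq> 0"
  shows "((\<lambda>x. 1 / (x + c) ^ k) has_field_derivative (- real k * (1 / (x + c) ^ (k + 1)))) (at x within S)"
  using DERIV_invpow[of x "- c" k S] assms by simp

definition Zs :: "nat \<Rightarrow> real \<Rightarrow> real" where
  "Zs k x = 1 / x ^ k + 1 / (x - pi) ^ k + (\<Sum>m. rr k x m)"

lemma rr_summable:
  assumes "0 \<le> x" "x \<le> pi" "k \<ge> 2"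
  shows "summable (\<lambda>m. rr k x m)"
proof (rule summable_comparison_test')
  show "summable (\<lambda>m. 2 * (1 / (real m + 1) ^ 2))" using summable_inv_sq by (rule summable_mult)
  show "norm (rr k x m) \<le> 2 * (1 / (real m + 1) ^ 2)" for m using rr_bound(3)[OF assms, of m] by simp
qed

lemma rr_deriv:
  assumes "0 < x" "x < pi" "k \<ge> 2"
  shows "((\<lambda>x. \<Sum>m. rr k x m) has_field_derivative (- real k * (\<Sum>m. rr (k + 1) x m))) (at x)"
proof -
  define S where "S = {0<..<pi}"
  have xS: "x \<in> interior S" "x \<in> S" using assms by (auto simp: S_def)
  have der: "((\<lambda>y. rr k y m) has_field_derivative (- real k * rr (k + 1) y m)) (at y within S)" if "y \<in> S" for y m
  proof -
    have "y < (real m + 2) * pi" using that pi_gt3 by (simp add: S_def algebra_simps) (smt (verit) mult_le_cancel_right1 of_nat_0_le_iff pi_gt_zero)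
    then have a: "y - (real m + 2) * pi \<noteq> 0" by simp
    have b: "y + (real m + 1) * pi \<noteq> 0" using that by (simp add: S_def) (smt (verit) of_nat_0_le_iff pi_gt_zero mult_nonneg_nonneg)
    show ?thesis unfolding rr_def
      using DERIV_add[OF DERIV_invpow[OF a, of k S] DERIV_invpow'[OF b, of k S]]
      by (simp add: algebra_simps)
  qed
  have unif: "uniformly_convergent_on S (\<lambda>n y. \<Sum>i<n. - real k * rr (k + 1) y i)"
  proof (rule Weierstrass_m_test')
    show "summable (\<lambda>m. real k * (2 * (1 / (real m + 1) ^ 2)))"
      by (intro summable_mult summable_inv_sq)
    show "norm (- real k * rr (k + 1) y m) \<le> real k * (2 * (1 / (real m + 1) ^ 2))" if "y \<in> S" for y m
    proof -
      have "\<bar>rr (k + 1) y m\<bar> \<le> 2 * (1 / (real m + 1) ^ 2)" using rr_bound(3)[of y "k + 1" m] that assms by (auto simp: S_def)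
      then have "real k * \<bar>rr (k + 1) y m\<bar> \<le> real k * (2 * (1 / (real m + 1) ^ 2))" by (intro mult_left_mono) auto
      then show ?thesis by (simp add: abs_mult)
    qed
  qed
  have sm: "summable (\<lambda>n. rr k x n)" using rr_summable assms by simp
  have "((\<lambda>x. \<Sum>n. rr k x n) has_field_derivative (\<Sum>n. - real k * rr (k + 1) x n)) (at x)"
    using has_field_derivative_series'(2)[of S "\<lambda>n y. rr k y n" "\<lambda>n y. - real k * rr (k + 1) y n", OF _ der unif xS(2) sm xS(1)]
    by (simp add: S_def)
  moreover have "(\<Sum>n. - real k * rr (k + 1) x n) = - real k * (\<Sum>n. rr (k + 1) x n)"
    using rr_summable[of x "k + 1"] assms by (intro suminf_mult) auto
  ultimately show ?thesis by simp
qed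

lemma Zs_deriv:
  assumes "0 < x" "x < pi" "k \<ge> 2"
  shows "(Zs k has_field_derivative (- real k * Zs (k + 1) x)) (at x)"
proof -
  have a: "x - 0 \<noteq> 0" "x - pi \<noteq> 0" using assms by auto
  show ?thesis unfolding Zs_def[abs_def]
    using DERIV_add[OF DERIV_add[OF DERIV_invpow[OF a(1), of k UNIV] DERIV_invpow[OF a(2), of k UNIV]] rr_deriv[OF assms]]
    by (simp add: algebra_simps)
qed



lemma Zs_has_sum:
  assumes "0 < x" "x < pi" "k \<ge> 2"
  shows "((\<lambda>n::int. 1 / (x - of_int n * pi) ^ k) has_sum Zs k x) UNIV"
proof -
  define f where "f = (\<lambda>n::int. 1 / (x - of_int n * pi) ^ k)"
  define h1 where "h1 = (\<lambda>m::nat. int m + 2)"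
  define h2 where "h2 = (\<lambda>m::nat. - int m - 1)"
  define s1 where "s1 = (\<Sum>m. 1 / (x - (real m + 2) * pi) ^ k)"
  define s2 where "s2 = (\<Sum>m. 1 / (x + (real m + 1) * pi) ^ k)"
  have x: "0 \<le> x" "x \<le> pi" using assms by auto
  have sq: "summable (\<lambda>m. 1 / (real m + 1) ^ 2)" by (rule summable_inv_sq)
  have n1: "summable (\<lambda>m. norm (1 / (x - (real m + 2) * pi) ^ k))"
  proof (rule summable_comparison_test'[OF sq])
    fix m :: nat assume "m \<ge> 0"
    show "norm (norm (1 / (x - (real m + 2) * pi) ^ k)) \<le> 1 / (real m + 1) ^ 2"
      using rr_bound(1)[OF x assms(3), of m] by (simp only: real_norm_def abs_abs)
  qed
  have n2: "summable (\<lambda>m. norm (1 / (x + (real m + 1) * pi) ^ k))"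
  proof (rule summable_comparison_test'[OF sq])
    fix m :: nat assume "m \<ge> 0"
    show "norm (norm (1 / (x + (real m + 1) * pi) ^ k)) \<le> 1 / (real m + 1) ^ 2"
      using rr_bound(2)[OF x assms(3), of m] by (simp only: real_norm_def abs_abs)
  qed
  have c1: "f \<circ> h1 = (\<lambda>m. 1 / (x - (real m + 2) * pi) ^ k)"
    by (auto simp: f_def h1_def fun_eq_iff)
  have c2: "f \<circ> h2 = (\<lambda>m. 1 / (x + (real m + 1) * pi) ^ k)"
    by (auto simp: f_def h2_def fun_eq_iff algebra_simps)
  have hs1: "((f \<circ> h1) has_sum s1) UNIV" unfolding c1 s1_def
    by (rule norm_summable_imp_has_sum[OF n1 summable_sums[OF summable_norm_cancel[OF n1]]])
  have hs2: "((f \<circ> h2) has_sum s2) UNIV" unfolding c2 s2_def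
    by (rule norm_summable_imp_has_sum[OF n2 summable_sums[OF summable_norm_cancel[OF n2]]])
  have i1: "inj h1" "inj h2" by (auto simp: h1_def h2_def inj_def)
  have H1: "(f has_sum s1) (range h1)" using hs1 has_sum_reindex[OF inj_on_subset[OF i1(1)]] by auto
  have H2: "(f has_sum s2) (range h2)" using hs2 has_sum_reindex[OF inj_on_subset[OF i1(2)]] by auto
  have H0: "(f has_sum (f 0 + f 1)) {0, 1}" by (intro has_sum_finiteI) auto
  have U: "UNIV = ({0, 1} \<union> range h1) \<union> range h2"
  proof (intro equalityI subsetI)
    fix n :: int assume "n \<in> UNIV"
    show "n \<in> ({0, 1} \<union> range h1) \<union> range h2"
    proof (cases "n \<ge> 2")
      case True
      then have "n = h1 (nat (n - 2))" by (simp add: h1_def)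
      then show ?thesis by blast
    next
      case False
      show ?thesis
      proof (cases "n \<le> -1")
        case True
        then have "n = h2 (nat (- n - 1))" by (simp add: h2_def)
        then show ?thesis by blast
      next
        case False
        then have "n = 0 \<or> n = 1" using \<open>\<not> n \<ge> 2\<close> by auto
        then show ?thesis by auto
      qed
    qed
  qed auto
  have d1: "{0, 1} \<inter> range h1 = {}" "({0, 1} \<union> range h1) \<inter> range h2 = {}"
    by (auto simp: h1_def h2_def)
  have "(f has_sum ((f 0 + f 1) + s1 + s2)) (({0, 1} \<union> range h1) \<union> range h2)"
    by (intro has_sum_Un_disjoint H0 H1 H2 d1)
  then have "(f has_sum ((f 0 + f 1) + s1 + s2)) UNIV" by (simp only: U[symmetric])
  moreover have "(f 0 + f 1) + s1 + s2 = Zs k x"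
  proof -
    have e: "(\<Sum>m. rr k x m) = s1 + s2" unfolding rr_def s1_def s2_def
      using suminf_add[OF summable_norm_cancel[OF n1] summable_norm_cancel[OF n2]] by simp
    have "f 0 = 1 / x ^ k" "f 1 = 1 / (x - pi) ^ k" unfolding f_def by simp_all
    then show ?thesis unfolding Zs_def e by simp
  qed
  ultimately have "(f has_sum Zs k x) UNIV" by simp
  then show ?thesis unfolding f_def .
qed



lemma Zs2_dup:
  assumes "0 < x" "x < pi"
  shows "Zs 2 (x / 2) + Zs 2 ((x + pi) / 2) = 4 * Zs 2 x"
proof -
  define f where "f = (\<lambda>n::int. 1 / (x - of_int n * pi) ^ 2)"
  have H: "(f has_sum Zs 2 x) UNIV" unfolding f_def using Zs_has_sum[OF assms] by simp
  have h1: "((\<lambda>n::int. 1 / (x / 2 - of_int n * pi) ^ 2) has_sum Zs 2 (x / 2)) UNIV"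
    using Zs_has_sum[of "x / 2" 2] assms by simp
  have h2: "((\<lambda>n::int. 1 / ((x + pi) / 2 - of_int n * pi) ^ 2) has_sum Zs 2 ((x + pi) / 2)) UNIV"
    using Zs_has_sum[of "(x + pi) / 2" 2] assms by simp
  have e1: "(\<lambda>n::int. 1 / (x / 2 - of_int n * pi) ^ 2) = (\<lambda>n. 4 * (f \<circ> (\<lambda>n. 2 * n)) n)"
    by (auto simp: f_def fun_eq_iff field_simps power2_eq_square)
  have e2: "(\<lambda>n::int. 1 / ((x + pi) / 2 - of_int n * pi) ^ 2) = (\<lambda>n. 4 * (f \<circ> (\<lambda>n. 2 * n - 1)) n)"
    by (auto simp: f_def fun_eq_iff field_simps power2_eq_square)
  have g1: "((f \<circ> (\<lambda>n. 2 * n)) has_sum (Zs 2 (x / 2) / 4)) UNIV"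
    using has_sum_cmult_right[OF h1[unfolded e1], of "1/4"] by (simp add: o_def)
  have g2: "((f \<circ> (\<lambda>n. 2 * n - 1)) has_sum (Zs 2 ((x + pi) / 2) / 4)) UNIV"
    using has_sum_cmult_right[OF h2[unfolded e2], of "1/4"] by (simp add: o_def)
  have i1: "inj (\<lambda>n::int. 2 * n)" "inj (\<lambda>n::int. 2 * n - 1)" by (auto simp: inj_def)
  have G1: "(f has_sum (Zs 2 (x / 2) / 4)) (range (\<lambda>n::int. 2 * n))"
    using g1 has_sum_reindex[OF i1(1)] by blast
  have G2: "(f has_sum (Zs 2 ((x + pi) / 2) / 4)) (range (\<lambda>n::int. 2 * n - 1))"
    using g2 has_sum_reindex[OF i1(2)] by blast
  have d: "range (\<lambda>n::int. 2 * n) \<inter> range (\<lambda>n::int. 2 * n - 1) = {}" by auto presburger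
  have U: "range (\<lambda>n::int. 2 * n) \<union> range (\<lambda>n::int. 2 * n - 1) = UNIV"
  proof -
    have "n \<in> range (\<lambda>n::int. 2 * n) \<union> range (\<lambda>n::int. 2 * n - 1)" for n :: int
    proof (cases "even n")
      case True then obtain m where "n = 2 * m" by blast
      then show ?thesis by blast
    next
      case False then obtain m where "n = 2 * m + 1" by (blast elim: oddE)
      then have "n = 2 * (m + 1) - 1" by simp
      then show ?thesis by blast
    qed
    then show ?thesis by blast
  qed
  have "(f has_sum (Zs 2 (x / 2) / 4 + Zs 2 ((x + pi) / 2) / 4)) UNIV"
    using has_sum_Un_disjoint[OF G1 G2 d] unfolding U .
  with H have "Zs 2 x = Zs 2 (x / 2) / 4 + Zs 2 ((x + pi) / 2) / 4" by (rule has_sum_unique)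
  then show ?thesis by simp
qed

lemma sin_dup:
  assumes "0 < x" "x < pi"
  shows "1 / sin (x / 2) ^ 2 + 1 / sin ((x + pi) / 2) ^ 2 = 4 / sin x ^ 2"
proof -
  have c: "sin ((x + pi) / 2) = cos (x / 2)" by (simp add: add_divide_distrib sin_add)
  have s: "sin x = 2 * sin (x / 2) * cos (x / 2)" using sin_double[of "x / 2"] by simp
  have p1: "sin (x / 2) > 0" using assms by (intro sin_gt_zero) auto
  have p2: "cos (x / 2) > 0" using assms by (intro cos_gt_zero) auto
  have sc: "sin (x / 2) ^ 2 + cos (x / 2) ^ 2 = 1" by simp
  show ?thesis unfolding c s using p1 p2 sc by (simp add: field_simps power_mult_distrib)
qed



lemma sin_sq_bound:
  fixes x :: real
  assumes "0 < x" "x \<le> pi / 2"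
  shows "0 \<le> 1 / sin x ^ 2 - 1 / x ^ 2" "1 / sin x ^ 2 - 1 / x ^ 2 \<le> 4 / 3"
proof -
  define s where "s = sin x"
  have sx: "s \<le> x" unfolding s_def using sin_x_le_x assms by simp
  have "(\<Sum>m<3. sin_coeff m * x ^ m) = x" by (simp add: sin_coeff_def eval_nat_numeral)
  then have "\<bar>s - x\<bar> \<le> inverse (fact 3) * \<bar>x\<bar> ^ 3" unfolding s_def using Maclaurin_sin_bound[of x 3] by simp
  then have m: "x - s \<le> x ^ 3 / 6" using assms by (simp add: eval_nat_numeral abs_if split: if_splits)
  have x2: "x ^ 2 \<le> 3"
  proof -
    have "x ^ 2 \<le> (pi / 2) ^ 2" using assms by (intro power_mono) auto
    also have "\<dots> \<le> 3"
    proof -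
      have p: "pi \<le> 17 / 5" "0 \<le> pi" using pi_approx(2) pi_gt_zero by simp_all
      have "pi * pi \<le> (17 / 5) * (17 / 5)" using p by (intro mult_mono) auto
      then show ?thesis by (simp add: power2_eq_square)
    qed
    finally show ?thesis .
  qed
  have "x ^ 3 / 6 = x * (x ^ 2 / 6)" by (simp add: eval_nat_numeral)
  also have "\<dots> \<le> x * (1 / 2)" using x2 assms by (intro mult_left_mono) auto
  finally have s2: "x / 2 \<le> s" using m by simp
  have sp: "s > 0" using s2 assms by simp
  have "x ^ 2 - s ^ 2 = (x - s) * (x + s)" by (simp add: power2_eq_square algebra_simps)
  also have "\<dots> \<le> (x ^ 3 / 6) * (2 * x)" using m sx sp assms by (intro mult_mono) auto
  also have "\<dots> = x ^ 4 / 3" by (simp add: eval_nat_numeral)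
  finally have A: "x ^ 2 - s ^ 2 \<le> x ^ 4 / 3" .
  have "(x / 2) ^ 2 \<le> s ^ 2" using s2 assms by (intro power_mono) auto
  then have "x ^ 2 \<le> 4 * s ^ 2" by (simp add: power_divide)
  then have "x ^ 2 * x ^ 2 \<le> x ^ 2 * (4 * s ^ 2)" by (intro mult_left_mono) auto
  then have B: "x ^ 4 / 3 \<le> 4 / 3 * (x ^ 2 * s ^ 2)"
    by (simp add: eval_nat_numeral power2_eq_square mult_ac)
  have "1 / s ^ 2 - 1 / x ^ 2 = (x ^ 2 - s ^ 2) / (x ^ 2 * s ^ 2)" using sp assms by (simp add: field_simps)
  moreover have "(x ^ 2 - s ^ 2) / (x ^ 2 * s ^ 2) \<le> 4 / 3" using A B sp assms by (simp add: divide_le_eq)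
  moreover have "0 \<le> (x ^ 2 - s ^ 2)" using sx sp by (simp add: power_mono)
  ultimately show "0 \<le> 1 / sin x ^ 2 - 1 / x ^ 2" "1 / sin x ^ 2 - 1 / x ^ 2 \<le> 4 / 3"
    unfolding s_def by simp_all
qed

definition HH :: "real \<Rightarrow> real" where
  "HH x = 1 / sin x ^ 2 - 1 / x ^ 2 - 1 / (x - pi) ^ 2"

lemma HH_sym: "HH (pi - x) = HH x"
  unfolding HH_def by (simp add: power2_eq_square algebra_simps)

lemma HH_bound_half:
  assumes "0 < x" "x \<le> pi / 2"
  shows "\<bar>HH x\<bar> \<le> 3"
proof -
  have "pi / 2 \<le> \<bar>x - pi\<bar>" using assms by simp
  then have "(pi / 2) ^ 2 \<le> (x - pi) ^ 2" by (metis abs_le_square_iff abs_of_nonneg pi_half_ge_zero)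
  moreover have "1 \<le> (pi / 2) ^ 2"
  proof -
    have "2 * 2 \<le> pi * pi" using pi_gt3 by (intro mult_mono) auto
    then show ?thesis by (simp add: power2_eq_square)
  qed
  ultimately have "1 \<le> (x - pi) ^ 2" by linarith
  then have q: "0 \<le> 1 / (x - pi) ^ 2" "1 / (x - pi) ^ 2 \<le> 1"
    using le_imp_inverse_le[of 1 "(x - pi) ^ 2"] by (auto simp: inverse_eq_divide)
  have a: "0 \<le> 1 / sin x ^ 2 - 1 / x ^ 2" "1 / sin x ^ 2 - 1 / x ^ 2 \<le> 4 / 3" using sin_sq_bound[OF assms] by auto
  show ?thesis unfolding HH_def abs_le_iff using a q by linarith
qed

lemma HH_bound:
  assumes "0 < x" "x < pi"
  shows "\<bar>HH x\<bar> \<le> 3"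
proof (cases "x \<le> pi / 2")
  case True then show ?thesis using HH_bound_half assms by simp
next
  case False
  then have "\<bar>HH (pi - x)\<bar> \<le> 3" using assms by (intro HH_bound_half) auto
  then show ?thesis by (simp add: HH_sym)
qed

lemma rr2_bound:
  assumes "0 < x" "x < pi"
  shows "\<bar>\<Sum>m. rr 2 x m\<bar> \<le> (\<Sum>m. 2 * (1 / (real m + 1) ^ 2))"
proof -
  have b: "\<bar>rr 2 x m\<bar> \<le> 2 * (1 / (real m + 1) ^ 2)" for m using rr_bound(3)[of x 2 m] assms by simp
  have s2: "summable (\<lambda>m. 2 * (1 / (real m + 1) ^ 2))" by (intro summable_mult summable_inv_sq)
  have s1: "summable (\<lambda>m. \<bar>rr 2 x m\<bar>)" by (rule summable_comparison_test'[OF s2]) (use b in simp)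
  have "\<bar>\<Sum>m. rr 2 x m\<bar> \<le> (\<Sum>m. \<bar>rr 2 x m\<bar>)" by (rule summable_rabs[OF s1])
  also have "\<dots> \<le> (\<Sum>m. 2 * (1 / (real m + 1) ^ 2))" by (rule suminf_le[OF b s1 s2])
  finally show ?thesis .
qed

lemma sin_pfd:
  assumes "0 < x" "x < pi"
  shows "1 / sin x ^ 2 = Zs 2 x"
proof -
  define S where "S = {0<..<pi}"
  define g where "g y = 1 / sin y ^ 2 - Zs 2 y" for y
  define K where "K = 3 + (\<Sum>m. 2 * (1 / (real m + 1) ^ 2))"
  have gH: "g y = HH y - (\<Sum>m. rr 2 y m)" for y unfolding g_def HH_def Zs_def by simp
  have B: "\<bar>g y\<bar> \<le> K" if "y \<in> S" for y
  proof -
    have "\<bar>g y\<bar> \<le> \<bar>HH y\<bar> + \<bar>\<Sum>m. rr 2 y m\<bar>" unfolding gH by linarith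
    then show ?thesis unfolding K_def using HH_bound[of y] rr2_bound[of y] that by (simp add: S_def)
  qed
  have D: "g (y / 2) + g ((y + pi) / 2) = 4 * g y" if "y \<in> S" for y
    using Zs2_dup[of y] sin_dup[of y] that unfolding g_def S_def by (simp add: algebra_simps)
  define M where "M = Sup ((\<lambda>y. \<bar>g y\<bar>) ` S)"
  have bdd: "bdd_above ((\<lambda>y. \<bar>g y\<bar>) ` S)" using B by (intro bdd_aboveI2) auto
  have "pi / 2 \<in> S" using pi_gt_zero by (simp add: S_def)
  then have ne: "(\<lambda>y. \<bar>g y\<bar>) ` S \<noteq> {}" by blast
  have up: "\<bar>g y\<bar> \<le> M" if "y \<in> S" for y unfolding M_def using bdd that by (intro cSup_upper) auto
  have half: "\<bar>g y\<bar> \<le> M / 2" if "y \<in> S" for y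
  proof -
    have a: "y / 2 \<in> S" "(y + pi) / 2 \<in> S" using that by (auto simp: S_def)
    have "4 * \<bar>g y\<bar> \<le> \<bar>g (y / 2)\<bar> + \<bar>g ((y + pi) / 2)\<bar>" using D[OF that] by linarith
    then show ?thesis using up[OF a(1)] up[OF a(2)] by linarith
  qed
  have "M \<le> M / 2" unfolding M_def[symmetric] using ne half
    by (subst M_def, intro cSup_least) auto
  moreover have "xS": "x \<in> S" using assms by (simp add: S_def)
  ultimately have "\<bar>g x\<bar> \<le> 0" using up[of x] by linarith
  then show ?thesis unfolding g_def by simp
qed



lemma DERIV_isinp:
  fixes x :: real
  assumes "sin x \<noteq> 0"
  shows "((\<lambda>x. 1 / sin x ^ n) has_field_derivative (- real n * (cos x * (1 / sin x ^ (n + 1))))) (at x)"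
proof -
  have d: "((\<lambda>x. inverse (sin x ^ n)) has_field_derivative - (inverse (sin x ^ n) * (real n * sin x ^ (n - 1) * cos x) * inverse (sin x ^ n))) (at x)"
  proof (rule DERIV_inverse')
    from DERIV_power[OF DERIV_sin[of x], of n]
    show "((\<lambda>x. sin x ^ n) has_field_derivative real n * sin x ^ (n - 1) * cos x) (at x)"
      by (simp add: mult_ac)
  qed (use assms in auto)
  have eq: "- (inverse (y ^ n) * (real n * y ^ (n - 1) * c) * inverse (y ^ n)) = - real n * (c * (1 / y ^ (n + 1)))"
    if y: "y \<noteq> 0" for y c :: real
  proof (cases n)
    case (Suc j)
    have "inverse (y ^ n) * (real n * y ^ (n - 1) * c) * inverse (y ^ n) = real n * c * (y ^ j / (y ^ Suc j * y ^ Suc j))"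
      using Suc by (simp add: divide_inverse mult_ac)
    also have "y ^ j / (y ^ Suc j * y ^ Suc j) = 1 / y ^ (n + 1)"
      using Suc y by (simp add: field_simps power_Suc)
    finally show ?thesis by simp
  qed simp
  note e = eq[OF assms, of "cos x"]
  from d[unfolded e] show ?thesis by (simp add: inverse_eq_divide)
qed

definition Es :: "nat \<Rightarrow> real \<Rightarrow> real" where "Es v x = fact (2 * v - 1) * (1 / sin x ^ (2 * v))"
definition E1 :: "nat \<Rightarrow> real \<Rightarrow> real" where "E1 v x = - fact (2 * v - 1) * real (2 * v) * (cos x * (1 / sin x ^ (2 * v + 1)))"

lemma Es_deriv: "sin x \<noteq> 0 \<Longrightarrow> (Es v has_field_derivative E1 v x) (at x)"
  unfolding Es_def[abs_def] E1_def using DERIV_cmult[OF DERIV_isinp[of x "2 * v"], of "fact (2 * v - 1)"]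
  by (simp add: mult_ac)

lemma E1_deriv:
  assumes "sin x \<noteq> 0" "v \<ge> 1"
  shows "(E1 v has_field_derivative (Es (v + 1) x - 4 * real v ^ 2 * Es v x)) (at x)"
proof -
  define F where "F = (fact (2 * v - 1) :: real)"
  have d: "((\<lambda>x. cos x * (1 / sin x ^ (2 * v + 1))) has_field_derivative
      (- sin x * (1 / sin x ^ (2 * v + 1)) + cos x * (- real (2 * v + 1) * (cos x * (1 / sin x ^ (2 * v + 1 + 1)))))) (at x)"
    using DERIV_mult[OF DERIV_cos DERIV_isinp[OF assms(1), of "2 * v + 1"]] assms(1) by (simp add: mult_ac)
  have "(E1 v has_field_derivative - F * real (2 * v) * (- sin x * (1 / sin x ^ (2 * v + 1)) + cos x * (- real (2 * v + 1) * (cos x * (1 / sin x ^ (2 * v + 1 + 1)))))) (at x)"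
    unfolding E1_def[abs_def] F_def using DERIV_cmult[OF d, of "- fact (2 * v - 1) * real (2 * v)"] by (simp add: mult_ac)
  moreover have "- F * real (2 * v) * (- sin x * (1 / sin x ^ (2 * v + 1)) + cos x * (- real (2 * v + 1) * (cos x * (1 / sin x ^ (2 * v + 1 + 1)))))
      = Es (v + 1) x - 4 * real v ^ 2 * Es v x"
  proof -
    define s where "s = sin x"
    define p where "p = s ^ (2 * v)"
    have s0: "s \<noteq> 0" "p \<noteq> 0" using assms by (auto simp: s_def p_def)
    have c2: "cos x * cos x = 1 - s * s" unfolding s_def using sin_cos_squared_add[of x] by (simp add: power2_eq_square)
    have f: "fact (2 * (v + 1) - 1) = (2 * real v + 1) * (2 * real v) * F"
      unfolding F_def using fact_step[of v] assms by (simp add: algebra_simps)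
    have p1: "sin x ^ (2 * v + 1) = s * p" "sin x ^ (2 * v + 1 + 1) = s * s * p" "sin x ^ (2 * (v + 1)) = s * s * p"
      by (simp_all add: s_def p_def power_Suc algebra_simps)
    have L: "- F * real (2 * v) * (- sin x * (1 / sin x ^ (2 * v + 1)) + cos x * (- real (2 * v + 1) * (cos x * (1 / sin x ^ (2 * v + 1 + 1)))))
        = F * (2 * real v) * (1 / p + (2 * real v + 1) * (cos x * cos x) / (s * s * p))"
      unfolding p1 using s0 by (simp add: s_def field_simps)
    have R: "Es (v + 1) x - 4 * real v ^ 2 * Es v x = (2 * real v + 1) * (2 * real v) * F / (s * s * p) - 4 * real v ^ 2 * F / p"
      unfolding Es_def f p1 by (simp add: s_def p_def F_def)
    show ?thesis unfolding L R c2 using s0 by (simp add: field_simps power2_eq_square)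
  qed
  ultimately show ?thesis by simp
qed



definition Cc :: "nat \<Rightarrow> nat \<Rightarrow> real" where
  "Cc v j = 4 ^ j * esym_sq v j * fact (2 * (v - j) - 1)"

definition Hs :: "nat \<Rightarrow> real \<Rightarrow> real" where
  "Hs v x = (\<Sum>j<v. Cc v j * Zs (2 * (v - j)) x)"
definition H1 :: "nat \<Rightarrow> real \<Rightarrow> real" where
  "H1 v x = (\<Sum>j<v. Cc v j * (- real (2 * (v - j)) * Zs (2 * (v - j) + 1) x))"
definition H2 :: "nat \<Rightarrow> real \<Rightarrow> real" where
  "H2 v x = (\<Sum>j<v. Cc v j * (real (2 * (v - j)) * real (2 * (v - j) + 1) * Zs (2 * (v - j) + 2) x))"

lemma Hs_deriv:
  assumes "0 < x" "x < pi"
  shows "(Hs v has_field_derivative H1 v x) (at x)"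
  unfolding Hs_def[abs_def] H1_def
proof (rule DERIV_sum)
  fix j assume "j \<in> {..<v}"
  then have "2 * (v - j) \<ge> 2" by simp
  from DERIV_cmult[OF Zs_deriv[OF assms this], of "Cc v j"]
  show "((\<lambda>x. Cc v j * Zs (2 * (v - j)) x) has_field_derivative Cc v j * (- real (2 * (v - j)) * Zs (2 * (v - j) + 1) x)) (at x)" .
qed

lemma H1_deriv:
  assumes "0 < x" "x < pi"
  shows "(H1 v has_field_derivative H2 v x) (at x)"
  unfolding H1_def[abs_def] H2_def
proof (rule DERIV_sum)
  fix j assume "j \<in> {..<v}"
  have "2 * (v - j) + 1 \<ge> 2" using \<open>j \<in> {..<v}\<close> by simp
  from DERIV_cmult[OF DERIV_cmult[OF Zs_deriv[OF assms this], of "- real (2 * (v - j))"], of "Cc v j"]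
  show "((\<lambda>x. Cc v j * (- real (2 * (v - j)) * Zs (2 * (v - j) + 1) x)) has_field_derivative
          Cc v j * (real (2 * (v - j)) * real (2 * (v - j) + 1) * Zs (2 * (v - j) + 2) x)) (at x)"
    by (rule DERIV_cong) (simp add: algebra_simps)
qed

lemma Hs_rec:
  assumes "v \<ge> 1"
  shows "Hs (v + 1) x = H2 v x + 4 * real v ^ 2 * Hs v x"
proof -
  define T1 where "T1 j = 4 ^ j * esym_sq v j * fact (2 * (v + 1 - j) - 1) * Zs (2 * (v + 1 - j)) x" for j
  define T2 where "T2 j = (if j = 0 then 0 else 4 ^ j * (real v ^ 2 * esym_sq v (j - 1)) * fact (2 * (v + 1 - j) - 1) * Zs (2 * (v + 1 - j)) x)" for j
  have split: "Cc (v + 1) j * Zs (2 * (v + 1 - j)) x = T1 j + T2 j" if "j < v + 1" for j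
  proof (cases "j = 0")
    case True then show ?thesis unfolding Cc_def T1_def T2_def by (simp add: esym_0)
  next
    case False
    then have "esym_sq (Suc v) j = esym_sq v j + real v ^ 2 * esym_sq v (j - 1)"
      using esym_rec[OF assms] by simp
    then show ?thesis unfolding Cc_def T1_def T2_def using False by (simp add: algebra_simps)
  qed
  have "Hs (v + 1) x = (\<Sum>j<v + 1. T1 j) + (\<Sum>j<v + 1. T2 j)"
    unfolding Hs_def sum.distrib[symmetric] using split by (intro sum.cong) auto
  also have "(\<Sum>j<v + 1. T1 j) = (\<Sum>j<v. T1 j)"
    using esym_top[of v v] assms by (simp add: T1_def)
  also have "(\<Sum>j<v. T1 j) = H2 v x"
    unfolding H2_def
  proof (intro sum.cong refl)
    fix j assume "j \<in> {..<v}"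
    define d where "d = v - j"
    then have d1: "d \<ge> 1" using \<open>j \<in> {..<v}\<close> by simp
    have a: "2 * (v + 1 - j) - 1 = 2 * d + 1" "2 * (v + 1 - j) = 2 * d + 2" "2 * (v - j) = 2 * d"
      "2 * (v - j) - 1 = 2 * d - 1" "2 * (v - j) + 1 = 2 * d + 1" "2 * (v - j) + 2 = 2 * d + 2"
      using d1 \<open>j \<in> {..<v}\<close> by (auto simp: d_def)
    have f: "(fact (2 * d + 1) :: real) = (2 * real d + 1) * (2 * real d) * fact (2 * d - 1)"
      by (rule fact_step[OF d1])
    show "T1 j = Cc v j * (real (2 * (v - j)) * real (2 * (v - j) + 1) * Zs (2 * (v - j) + 2) x)"
      unfolding T1_def Cc_def a(1,4) unfolding a(2,3,5,6) f by (simp add: algebra_simps)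
  qed
  also have "(\<Sum>j<v + 1. T2 j) = (\<Sum>j<v. T2 (Suc j))"
    unfolding Suc_eq_plus1[symmetric] sum.lessThan_Suc_shift by (simp add: T2_def)
  also have "\<dots> = 4 * real v ^ 2 * Hs v x"
    unfolding Hs_def sum_distrib_left
  proof (intro sum.cong refl)
    fix j assume "j \<in> {..<v}"
    have a: "v + 1 - Suc j = v - j" by simp
    show "T2 (Suc j) = 4 * real v ^ 2 * (Cc v j * Zs (2 * (v - j)) x)"
      unfolding T2_def Cc_def a by (simp add: algebra_simps)
  qed
  finally show ?thesis .
qed

lemma Es_Hs:
  assumes "v \<ge> 1"
  shows "\<forall>x. 0 < x \<and> x < pi \<longrightarrow> Es v x = Hs v x"
  using assms
proof (induction v rule: nat_induct_at_least)
  case base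
  show ?case
  proof (intro allI impI)
    fix x :: real assume "0 < x \<and> x < pi"
    then show "Es 1 x = Hs 1 x" using sin_pfd[of x] by (simp add: Es_def Hs_def Cc_def esym_0)
  qed
next
  case (Suc v)
  define S where "S = {0<..<pi::real}"
  have eq: "\<And>y. y \<in> S \<Longrightarrow> Es v y = Hs v y" using Suc.IH by (auto simp: S_def)
  have sn: "sin y \<noteq> 0" if "y \<in> S" for y
    using that sin_gt_zero[of y] by (auto simp: S_def)
  have e1: "E1 v y = H1 v y" if y: "y \<in> S" for y
  proof -
    have "(Hs v has_field_derivative E1 v y) (at y)"
      using has_field_derivative_transform_within_open[OF Es_deriv[OF sn[OF y]], where S = S and g = "Hs v"] eq y
      by (auto simp: S_def)
    moreover have "(Hs v has_field_derivative H1 v y) (at y)" using Hs_deriv y by (auto simp: S_def)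
    ultimately show ?thesis by (rule DERIV_unique)
  qed
  show ?case
  proof (intro allI impI)
    fix x :: real assume x: "0 < x \<and> x < pi"
    then have xS: "x \<in> S" by (simp add: S_def)
    have "(H1 v has_field_derivative (Es (v + 1) x - 4 * real v ^ 2 * Es v x)) (at x)"
      using has_field_derivative_transform_within_open[OF E1_deriv[OF sn[OF xS] Suc.hyps], where S = S and g = "H1 v"] e1 xS
      by (auto simp: S_def)
    moreover have "(H1 v has_field_derivative H2 v x) (at x)" using H1_deriv x by auto
    ultimately have "Es (v + 1) x - 4 * real v ^ 2 * Es v x = H2 v x" by (rule DERIV_unique)
    then show "Es (Suc v) x = Hs (Suc v) x" using Hs_rec[OF Suc.hyps, of x] eq[OF xS] by simp
  qed
qed



lemma zeta_has_sum:
  assumes "K \<ge> 2"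
  shows "((\<lambda>k::nat. 1 / real k ^ K) has_sum zeta_real (real K)) {1..}"
proof -
  have sm: "summable (\<lambda>n. 1 / real (Suc n) ^ K)"
    using inverse_power_summable[OF assms, where 'a=real] by (subst (asm) summable_Suc_iff[symmetric]) (simp add: divide_inverse)
  have z: "zeta_real (real K) = (\<Sum>n. 1 / real (Suc n) ^ K)"
    unfolding zeta_real_def by (simp add: powr_realpow)
  have "((\<lambda>n. 1 / real (Suc n) ^ K) has_sum zeta_real (real K)) UNIV"
    unfolding z by (rule norm_summable_imp_has_sum) (use sm in \<open>simp_all add: summable_sums\<close>)
  then have "((\<lambda>k::nat. 1 / real k ^ K) has_sum zeta_real (real K)) (Suc ` UNIV)"
    using has_sum_reindex[of Suc UNIV "\<lambda>k::nat. 1 / real k ^ K"] by (simp add: o_def)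
  moreover have "Suc ` UNIV = {1::nat..}" by (auto simp: image_iff dest: Suc_le_D)
  ultimately show ?thesis by simp
qed

lemma odd_has_sum:
  assumes "K \<ge> 2"
  shows "((\<lambda>k::nat. 1 / real k ^ K) has_sum ((1 - 1 / 2 ^ K) * zeta_real (real K))) {k. odd k}"
proof -
  define f where "f = (\<lambda>k::nat. 1 / real k ^ K)"
  define z where "z = zeta_real (real K)"
  have Z: "(f has_sum z) {1..}" unfolding f_def z_def by (rule zeta_has_sum[OF assms])
  have ev: "(f has_sum (z / 2 ^ K)) ((\<lambda>k. 2 * k) ` {1..})"
  proof -
    have "((\<lambda>k. f k * (1 / 2 ^ K)) has_sum (z * (1 / 2 ^ K))) {1..}" by (rule has_sum_cmult_left[OF Z])
    moreover have "(\<lambda>k. f k * (1 / 2 ^ K)) = f \<circ> (\<lambda>k. 2 * k)" by (auto simp: f_def fun_eq_iff power_mult_distrib)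
    ultimately have "((f \<circ> (\<lambda>k. 2 * k)) has_sum (z / 2 ^ K)) {1..}" by simp
    then show ?thesis by (subst has_sum_reindex) (auto simp: inj_on_def)
  qed
  have so: "f summable_on {k. odd k}"
    using has_sum_imp_summable[OF Z] by (rule summable_on_subset_banach) (auto simp: Suc_le_eq odd_pos)
  then obtain L where L: "(f has_sum L) {k. odd k}" by (auto simp: summable_on_def)
  have U: "{k::nat. odd k} \<union> (\<lambda>k. 2 * k) ` {1..} = {1..}"
  proof (intro equalityI subsetI)
    fix k :: nat assume "k \<in> {1..}"
    then show "k \<in> {k. odd k} \<union> (\<lambda>k. 2 * k) ` {1..}"
      by (cases "even k") (auto elim!: evenE)
  qed (auto simp: Suc_le_eq odd_pos)
  have "(f has_sum (L + z / 2 ^ K)) {1..}"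
  proof -
    have d: "{k::nat. odd k} \<inter> (\<lambda>k. 2 * k) ` {1..} = {}" by auto
    show ?thesis using has_sum_Un_disjoint[OF L ev d] U by simp
  qed
  with Z have "z = L + z / 2 ^ K" by (rule has_sum_unique)
  then have "L = (1 - 1 / 2 ^ K) * z" by (simp add: algebra_simps)
  then show ?thesis using L unfolding f_def z_def by simp
qed

lemma Zs_quarter:
  assumes "m \<ge> 1"
  shows "Zs (2 * m) (pi / 4) = (4 / pi) ^ (2 * m) * ((1 - 1 / 2 ^ (2 * m)) * zeta_real (real (2 * m)))"
proof -
  define K where "K = 2 * m"
  have K2: "K \<ge> 2" using assms by (simp add: K_def)
  have H: "((\<lambda>n::int. 1 / (pi / 4 - of_int n * pi) ^ K) has_sum Zs K (pi / 4)) UNIV"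
    using Zs_has_sum[OF _ _ K2, of "pi / 4"] by simp
  have O: "((\<lambda>k::nat. 1 / real k ^ K) has_sum ((1 - 1 / 2 ^ K) * zeta_real (real K))) {k. odd k}"
    by (rule odd_has_sum[OF K2])
  define j where "j = (\<lambda>n::int. nat \<bar>1 - 4 * n\<bar>)"
  define i where "i = (\<lambda>k::nat. if k mod 4 = 1 then (1 - int k) div 4 else (1 + int k) div 4)"
  have O'': "((\<lambda>n. 1 / real (j n) ^ K) has_sum ((1 - 1 / 2 ^ K) * zeta_real (real K))) UNIV
     \<longleftrightarrow> ((\<lambda>k::nat. 1 / real k ^ K) has_sum ((1 - 1 / 2 ^ K) * zeta_real (real K))) {k. odd k}"
  proof (rule has_sum_reindex_bij_witness[where i = i and j = j])
    fix n :: int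
    show "i (j n) = n"
    proof (cases "n \<le> 0")
      case True
      then have "j n = nat (1 - 4 * n)" by (simp add: j_def)
      moreover have "nat (1 - 4 * n) = 4 * nat (- n) + 1" using True by (simp add: nat_eq_iff)
      then have "nat (1 - 4 * n) mod 4 = 1" by simp
      ultimately show ?thesis using True by (simp add: i_def)
    next
      case False
      then have "j n = nat (4 * n - 1)" by (simp add: j_def)
      moreover have "nat (4 * n - 1) = 4 * nat (n - 1) + 3" using False by (simp add: nat_eq_iff)
      then have "nat (4 * n - 1) mod 4 = 3" by simp
      ultimately show ?thesis using False by (simp add: i_def)
    qed
    show "j n \<in> {k. odd k}" by (simp add: j_def even_nat_iff)
  next
    fix k :: nat assume "k \<in> {k. odd k}"
    then have ok: "odd k" by simp
    show "j (i k) = k"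
    proof (cases "k mod 4 = 1")
      case True
      then have "4 * ((1 - int k) div 4) = 1 - int k" by presburger
      then show ?thesis using True by (simp add: i_def j_def)
    next
      case False
      then have "k mod 4 = 3" using ok by presburger
      then have "4 * ((1 + int k) div 4) = 1 + int k" by presburger
      then show ?thesis using False by (simp add: i_def j_def)
    qed
    show "i k \<in> UNIV" by simp
  qed auto
  have O': "((\<lambda>n. 1 / real (j n) ^ K) has_sum ((1 - 1 / 2 ^ K) * zeta_real (real K))) UNIV"
    using O O'' by simp
  have e: "1 / (pi / 4 - of_int n * pi) ^ K = (4 / pi) ^ K * (1 / real (j n) ^ K)" for n
  proof -
    have A: "pi / 4 - of_int n * pi = (pi / 4) * of_int (1 - 4 * n)" by (simp add: algebra_simps)
    have B: "(of_int (1 - 4 * n) :: real) ^ K = real (j n) ^ K"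
    proof -
      have "(of_int (1 - 4 * n) :: real) ^ K = \<bar>of_int (1 - 4 * n)\<bar> ^ K"
        unfolding K_def by (simp add: power_mult)
      also have "\<bar>of_int (1 - 4 * n) :: real\<bar> = real (j n)" unfolding j_def by simp
      finally show ?thesis .
    qed
    have "1 / (pi / 4 - of_int n * pi) ^ K = 1 / ((pi / 4) ^ K * (of_int (1 - 4 * n)) ^ K)"
      by (simp only: A power_mult_distrib)
    also have "\<dots> = 1 / ((pi / 4) ^ K * real (j n) ^ K)" by (simp only: B)
    also have "\<dots> = (4 / pi) ^ K * (1 / real (j n) ^ K)" by (simp add: power_divide)
    finally show ?thesis .
  qed
  have "((\<lambda>n::int. 1 / (pi / 4 - of_int n * pi) ^ K) has_sum ((4 / pi) ^ K * ((1 - 1 / 2 ^ K) * zeta_real (real K)))) UNIV"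
    unfolding e by (rule has_sum_cmult_right[OF O'])
  from has_sum_unique[OF H this] show ?thesis unfolding K_def by simp
qed



lemma term_eq:
  assumes "1 \<le> v" "i < v"
  shows "(2 ^ (2 * v - 2 * i) * cosec_num (2 * v) i
            - 2 ^ (2 * i) / fact (2 * v - 1) * esym_sq v i * Gamma (real (2 * v - 2 * i)))
          * (pi / 2) powr (real (2 * i) - real (2 * v)) * zeta_real (real (2 * v - 2 * i))
        = Cc v i * Zs (2 * (v - i)) (pi / 4) / fact (2 * v - 1)"
proof -
  define m where "m = v - i"
  have m1: "m \<ge> 1" using assms by (simp add: m_def)
  have a: "2 * v - 2 * i = 2 * m" by (simp add: m_def)
  have b: "real (2 * i) - real (2 * v) = - real (2 * m)" using assms by (simp add: m_def of_nat_diff)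
  have G: "Gamma (real (2 * m)) = fact (2 * m - 1)"
  proof -
    have e: "real (2 * m) = 1 + real (2 * m - 1)" using m1 by (simp add: of_nat_diff)
    have "Gamma (1 + real (2 * m - 1)) = (fact (2 * m - 1) :: real)" by (rule Gamma_fact)
    then show ?thesis by (simp only: e)
  qed
  define F where "F = (fact (2 * v - 1) :: real)"
  define z where "z = zeta_real (real (2 * m))"
  have F0: "F > 0" by (simp add: F_def)
  have c: "cosec_num (2 * v) i = Cc v i / F"
    using cosec_Bc[OF assms] unfolding Bc_def Cc_def F_def m_def by simp
  have g: "2 ^ (2 * i) / F * esym_sq v i * Gamma (real (2 * m)) = Cc v i / F"
  proof -
    have Cm: "Cc v i = 4 ^ i * esym_sq v i * fact (2 * m - 1)" unfolding Cc_def m_def ..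
    show ?thesis unfolding G Cm F_def by (simp add: power_mult)
  qed
  have p: "(pi / 2) powr (- real (2 * m)) = (2 / pi) ^ (2 * m)"
  proof -
    have h: "(pi / 2) powr (real (2 * m)) = (pi / 2) ^ (2 * m)" by (rule powr_realpow) simp
    have "(pi / 2) powr (- real (2 * m)) = inverse ((pi / 2) powr (real (2 * m)))" by (rule powr_minus)
    also have "\<dots> = inverse ((pi / 2) ^ (2 * m))" by (simp only: h)
    also have "\<dots> = (2 / pi) ^ (2 * m)" by (simp add: power_divide inverse_divide)
    finally show ?thesis .
  qed
  have Zq: "Zs (2 * m) (pi / 4) = (4 / pi) ^ (2 * m) * ((1 - 1 / 2 ^ (2 * m)) * z)"
    unfolding z_def by (rule Zs_quarter[OF m1])
  have q: "(4 / pi) ^ (2 * m) * (1 - 1 / 2 ^ (2 * m)) = (2 ^ (2 * m) - 1) * (2 / pi) ^ (2 * m)"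
  proof -
    have "(4 / pi) ^ (2 * m) = 2 ^ (2 * m) * (2 / pi) ^ (2 * m)"
      by (simp add: power_mult_distrib[symmetric])
    then show ?thesis by (simp add: field_simps)
  qed
  have R: "(2 ^ (2 * m) * (Cc v i / F) - Cc v i / F) * (2 / pi) ^ (2 * m) * z
        = Cc v i * ((4 / pi) ^ (2 * m) * ((1 - 1 / 2 ^ (2 * m)) * z)) / F"
  proof -
    have "(2 ^ (2 * m) * (Cc v i / F) - Cc v i / F) * (2 / pi) ^ (2 * m) * z
        = Cc v i / F * ((2 ^ (2 * m) - 1) * (2 / pi) ^ (2 * m)) * z" by (simp add: algebra_simps)
    also have "\<dots> = Cc v i / F * (((4 / pi) ^ (2 * m) * (1 - 1 / 2 ^ (2 * m))) * z)"
      unfolding q by simp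
    also have "\<dots> = Cc v i * ((4 / pi) ^ (2 * m) * ((1 - 1 / 2 ^ (2 * m)) * z)) / F"
      by (simp add: mult_ac)
    finally show ?thesis .
  qed
  show ?thesis unfolding a b c g p m_def[symmetric] Zq z_def[symmetric] F_def[symmetric] by (rule R)

qed

theorem mainTheorem6:
  fixes v :: nat
  assumes "v \<ge> 1"
  shows "(\<Sum>i<v. (2 ^ (2 * v - 2 * i) * cosec_num (2 * v) i
            - 2 ^ (2 * i) / fact (2 * v - 1) * esym_sq v i * Gamma (real (2 * v - 2 * i)))
          * (pi / 2) powr (real (2 * i) - real (2 * v)) * zeta_real (real (2 * v - 2 * i)))
         = 2 ^ v"
proof -
  have "(\<Sum>i<v. (2 ^ (2 * v - 2 * i) * cosec_num (2 * v) i
            - 2 ^ (2 * i) / fact (2 * v - 1) * esym_sq v i * Gamma (real (2 * v - 2 * i)))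
          * (pi / 2) powr (real (2 * i) - real (2 * v)) * zeta_real (real (2 * v - 2 * i)))
      = (\<Sum>i<v. Cc v i * Zs (2 * (v - i)) (pi / 4) / fact (2 * v - 1))"
    using term_eq[OF assms] by (intro sum.cong) auto
  also have "\<dots> = Hs v (pi / 4) / fact (2 * v - 1)"
    unfolding Hs_def by (simp add: sum_divide_distrib)
  also have "Hs v (pi / 4) = Es v (pi / 4)"
  proof -
    have "0 < pi / 4" "pi / 4 < pi" using pi_gt_zero by simp_all
    then show ?thesis using Es_Hs[OF assms] by simp
  qed
  also have "Es v (pi / 4) = fact (2 * v - 1) * 2 ^ v"
  proof -
    have s2: "sin (pi / 4) ^ 2 = 1 / 2" by (simp add: sin_45 power_divide)
    have "sin (pi / 4) ^ (2 * v) = (sin (pi / 4) ^ 2) ^ v" by (simp only: power_mult)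
    then have "sin (pi / 4) ^ (2 * v) = (1 / 2) ^ v" unfolding s2 .
    then show ?thesis unfolding Es_def by (simp add: power_divide)
  qed
  finally show ?thesis by simp
qed


end
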